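(* Let $x_s<x_t$ be integers, let $C\ge 0$, and let $f:[x_s,x_t]\to\mathbb{R}$ be such that $([x_s,x_t],f)$ is an Ameso($C$) pair. Suppose there exist $x^0\in[x_s,x_t]$ and a positive integer $b$ with $[x^0,x^0+b]\subseteq[x_s,x_t]$ such that $f(x^0)=\min_{y\in[x^0,x^0+b]}f(y)$ and $f(x^0)+C\le\max_{y\in[x^0,x^0+b]}f(y)$. Then $f(x^0)=\min_{y\in[x^0,x_t]}f(y)$.
   Context: For integers $a\le b$, $[a,b]$ denotes the set of integers $\{a,a+1,\dots,b\}$. Floors and ceilings of vectors are taken componentwise. A set $D^n\subseteq\mathbb{Z}^n$ is an Ameso set if $\lceil(\vec x+\vec y)/2\rceil,\lfloor(\vec x+\vec y)/2\rfloor\in D^n$ for all $\vec x,\vec y\in D^n$. For $C\ge 0$, $(D^n,f)$ is an Ameso($C$) pair if $D^n$ is an Ameso set, $f:D^n\to\mathbb{R}$ is bounded below, and $f(\vec x)+f(\vec y)+C\ge f(\lceil(\vec x+\vec y)/2\rceil)+f(\lfloor(\vec x+\vec y)/2\rfloor)$ for all $\vec x,\vec y\in D^n$. *)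

theory Defs
  imports Main "HOL.Complex_Main"
begin

(* One-dimensional (n = 1) instances of the paper's notions. *)

definition ameso_set :: "int set \<Rightarrow> bool" where
  "ameso_set D \<longleftrightarrow>
     (\<forall>x\<in>D. \<forall>y\<in>D. \<lceil>real_of_int (x + y) / 2\<rceil> \<in> D \<and> \<lfloor>real_of_int (x + y) / 2\<rfloor> \<in> D)"

definition ameso_pair :: "real \<Rightarrow> int set \<Rightarrow> (int \<Rightarrow> real) \<Rightarrow> bool" where
  "ameso_pair C D f \<longleftrightarrow>
     ameso_set D \<and> bdd_below (f ` D) \<and>
     (\<forall>x\<in>D. \<forall>y\<in>D.
        f x + f y + C \<ge> f \<lceil>real_of_int (x + y) / 2\<rceil> + f \<lfloor>real_of_int (x + y) / 2\<rfloor>)"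

end

theory Submission
  imports Defs
begin

lemma mid_inst:
  assumes "ameso_pair C D f" "u \<in> D" "v \<in> D" "u + v = 2 * q"
  shows "f u + f v + C \<ge> 2 * f q"
proof -
  have "real_of_int (u + v) / 2 = real_of_int q" using assms(4) by simp
  then show ?thesis using assms(1-3) unfolding ameso_pair_def
    by (metis ceiling_of_int floor_of_int mult_2)
qed

theorem lemma3:
  fixes xs xt x0 b :: int and C :: real and f :: "int \<Rightarrow> real"
  assumes "xs < xt"
    and "C \<ge> 0"
    and "ameso_pair C {xs..xt} f"
    and "x0 \<in> {xs..xt}"
    and "b > 0"
    and "{x0..x0 + b} \<subseteq> {xs..xt}"
    and "f x0 = Min (f ` {x0..x0 + b})"
    and "f x0 + C \<le> Max (f ` {x0..x0 + b})"
  shows "f x0 = Min (f ` {x0..xt})"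
proof -
  have minb: "\<And>w. w \<in> {x0..x0+b} \<Longrightarrow> f x0 \<le> f w"
    using assms(7) by simp
  have low: "f x0 \<le> f y" if y: "y \<in> {x0..xt}" for y
  proof (rule ccontr)
    assume ny: "\<not> f x0 \<le> f y"
    hence "y \<notin> {x0..x0+b}" using minb by force
    hence yb: "y > x0 + b" using y by auto
    define S where "S = {x0..y}"
    have Ssub: "S \<subseteq> {xs..xt}" using S_def y assms(4) by auto
    have finS: "finite S" "S \<noteq> {}" using S_def yb assms(5) by auto
    define M where "M = Max (f ` S)"
    have leM: "\<And>w. w \<in> S \<Longrightarrow> f w \<le> M" using finS M_def by simp
    have sub: "{x0..x0+b} \<subseteq> S" using S_def yb by auto
    have "Max (f ` {x0..x0+b}) \<le> M" unfolding M_def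
      using sub finS assms(5) by (intro Max_mono) auto
    hence MC: "f x0 + C \<le> M" using assms(8) by simp
    define Q where "Q = {q \<in> S. f q = M}"
    have "M \<in> f ` S" using finS M_def by simp
    hence Qne: "Q \<noteq> {}" using Q_def by auto
    have finQ: "finite Q" using Q_def finS by simp
    define q where "q = Max Q"
    have qQ: "q \<in> Q" using q_def finQ Qne by simp
    have qmax: "\<And>w. w \<in> Q \<Longrightarrow> w \<le> q" using q_def finQ by simp
    have qS: "q \<in> S" and fq: "f q = M" using qQ Q_def by auto
    have qx0: "q > x0"
    proof (rule ccontr)
      assume "\<not> q > x0"
      hence "q = x0" using qS S_def by auto
      hence "M = f x0" using fq by simp
      moreover have "f (x0+1) \<ge> f x0" using minb assms(5) by simp
      moreover have "x0 + 1 \<in> S" using S_def yb assms(5) by auto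
      ultimately have "x0 + 1 \<in> Q" using leM Q_def by force
      thus False using qmax \<open>q = x0\<close> by force
    qed
    show False
    proof (cases "2*q - y \<ge> x0")
      case True
      have w: "2*q - y \<in> S" using True qS S_def by auto
      have "f (2*q-y) + f y + C \<ge> 2 * f q"
        using mid_inst[OF assms(3)] w Ssub y assms(4) by (simp add: subset_iff)
      thus False using leM[OF w] fq MC ny by linarith
    next
      case False
      have w: "2*q - x0 \<in> S" using False qS qx0 S_def by auto
      have "f x0 + f (2*q-x0) + C \<ge> 2 * f q"
        using mid_inst[OF assms(3)] w Ssub assms(4) by (simp add: subset_iff)
      hence "f (2*q-x0) = M" using leM[OF w] fq MC by linarith
      hence "2*q - x0 \<in> Q" using w Q_def by simp
      thus False using qmax qx0 by force
    qed
  qed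
  show ?thesis
    by (rule Min_eqI[symmetric]) (use low assms(1,4,5,6) in auto)
qed

end
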